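(* Let $X_3=\{0,1,2\}$ and let $\alpha,\beta:X_3^*\to X_3^*$ be the length-preserving maps defined recursively by $\alpha(\emptyset)=\beta(\emptyset)=\emptyset$ and, for every word $w\in X_3^*$, \[\alpha(0w)=0\alpha(w),\quad \alpha(1w)=1\alpha(w),\quad \alpha(2w)=1\beta(w),\] \[\beta(0w)=1\alpha(w),\quad \beta(1w)=1\beta(w),\quad \beta(2w)=0\beta(w).\] Let $S_L$ be the semigroup of maps $X_3^*\to X_3^*$ generated by $\alpha$ and $\beta$ under composition. Then $S_L$ has the semigroup presentation \[S_L=\langle \alpha,\beta \mid \alpha^2=\alpha,\ \alpha\beta=\beta\rangle,\] i.e. the homomorphism from the semigroup with this presentation to $S_L$ sending the generators to the maps $\alpha,\beta$ is an isomorphism.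
   Context: Composition of maps is performed from right to left: $(\mu\nu)(u)=\mu(\nu(u))$. The maps $\alpha,\beta$ are the states of a finite 3-to-2 transducer (outputs lie in $\{0,1\}^*\subset X_3^*$), regarded here as maps of ternary words. *)

theory Defs
  imports Main
begin

datatype X3 = X0 | X1 | X2

fun alpha :: "X3 list \<Rightarrow> X3 list" and beta :: "X3 list \<Rightarrow> X3 list" where
  "alpha [] = []"
| "alpha (X0 # w) = X0 # alpha w"
| "alpha (X1 # w) = X1 # alpha w"
| "alpha (X2 # w) = X1 # beta w"
| "beta [] = []"
| "beta (X0 # w) = X1 # alpha w"
| "beta (X1 # w) = X1 # beta w"
| "beta (X2 # w) = X0 # beta w"

datatype gen = GA | GB

text \<open>Evaluation of a word g1 g2 ... gn over the generators as the composite map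
  g1 \<circ> g2 \<circ> ... \<circ> gn (composition right to left).\<close>
definition gen_map :: "gen \<Rightarrow> (X3 list \<Rightarrow> X3 list)" where
  "gen_map g = (case g of GA \<Rightarrow> alpha | GB \<Rightarrow> beta)"

definition eval_word :: "gen list \<Rightarrow> (X3 list \<Rightarrow> X3 list)" where
  "eval_word ws = foldr (\<lambda>g f. gen_map g \<circ> f) ws id"

text \<open>The free semigroup on {alpha, beta}: nonempty words.\<close>
definition free_words :: "gen list set" where
  "free_words = {ws. ws \<noteq> []}"

definition S_L :: "(X3 list \<Rightarrow> X3 list) set" where
  "S_L = eval_word ` free_words"

inductive pres_eq :: "gen list \<Rightarrow> gen list \<Rightarrow> bool" where
  rel1: "pres_eq (x @ [GA, GA] @ y) (x @ [GA] @ y)"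
| rel2: "pres_eq (x @ [GA, GB] @ y) (x @ [GB] @ y)"
| refl: "pres_eq w w"
| sym: "pres_eq u v \<Longrightarrow> pres_eq v u"
| trans: "pres_eq u v \<Longrightarrow> pres_eq v w \<Longrightarrow> pres_eq u w"

definition pres_rel :: "(gen list \<times> gen list) set" where
  "pres_rel = {(u, v). u \<in> free_words \<and> v \<in> free_words \<and> pres_eq u v}"

definition presented_semigroup :: "gen list set set" where
  "presented_semigroup = free_words // pres_rel"

end

theory Submission
  imports Defs
begin

lemma count_rep[simp]: "count_list (replicate n x) x = n" by (induction n) auto

lemma eval_word_Nil[simp]: "eval_word [] = id"
  by (simp add: eval_word_def)

lemma eval_word_Cons[simp]: "eval_word (g # w) = gen_map g \<circ> eval_word w"
  by (simp add: eval_word_def)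

lemma eval_word_append: "eval_word (x @ y) = eval_word x \<circ> eval_word y"
  by (induction x) auto

lemma alpha_idem: "alpha (alpha w) = alpha w \<and> alpha (beta w) = beta w"
proof (induction w)
  case Nil then show ?case by simp
next
  case (Cons x w) then show ?case by (cases x) auto
qed

lemma sound: "pres_eq u v \<Longrightarrow> eval_word u = eval_word v"
proof (induction rule: pres_eq.induct)
  case (rel1 x y)
  show ?case by (simp add: eval_word_append gen_map_def fun_eq_iff alpha_idem)
next
  case (rel2 x y)
  show ?case by (simp add: eval_word_append gen_map_def fun_eq_iff alpha_idem)
qed auto

lemma cong_left: "pres_eq u v \<Longrightarrow> pres_eq (x @ u) (x @ v)"
proof (induction rule: pres_eq.induct)
  case (rel1 y z)
  show ?case using pres_eq.rel1[of "x@y" z] by simp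
next
  case (rel2 y z)
  show ?case using pres_eq.rel2[of "x@y" z] by simp
qed (auto intro: pres_eq.intros)

definition nfw :: "nat \<Rightarrow> bool \<Rightarrow> gen list" where
  "nfw n a = replicate n GB @ (if a then [GA] else [])"

lemma NF: "w \<noteq> [] \<Longrightarrow> \<exists>n a. (a \<or> n > 0) \<and> pres_eq w (nfw n a)"
proof (induction w)
  case Nil then show ?case by simp
next
  case (Cons g w)
  show ?case
  proof (cases "w = []")
    case True
    then show ?thesis
    proof (cases g)
      case GA
      then show ?thesis using True by (intro exI[of _ 0] exI[of _ True]) (simp add: nfw_def pres_eq.refl)
    next
      case GB
      then show ?thesis using True by (intro exI[of _ 1] exI[of _ False]) (simp add: nfw_def pres_eq.refl)
    qed
  next
    case False
    then obtain n a where na: "a \<or> n > 0" "pres_eq w (nfw n a)" using Cons by blast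
    have c: "pres_eq (g # w) (g # nfw n a)" using cong_left[OF na(2), of "[g]"] by simp
    show ?thesis
    proof (cases g)
      case GB
      then have "g # nfw n a = nfw (Suc n) a" by (simp add: nfw_def)
      then show ?thesis using c na by auto
    next
      case GA
      show ?thesis
      proof (cases n)
        case 0
        then have a: a using na by simp
        have "pres_eq ([] @ [GA, GA] @ []) ([] @ [GA] @ [])" by (rule pres_eq.rel1)
        then have "pres_eq (g # nfw n a) (nfw 0 True)" using GA 0 a by (simp add: nfw_def)
        then show ?thesis using c by (blast intro: pres_eq.trans)
      next
        case (Suc p)
        have "pres_eq ([] @ [GA, GB] @ (replicate p GB @ (if a then [GA] else [])))
                     ([] @ [GB] @ (replicate p GB @ (if a then [GA] else [])))" by (rule pres_eq.rel2)
        then have "pres_eq (g # nfw n a) (nfw n a)" using GA Suc by (simp add: nfw_def)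
        then show ?thesis using c na by (blast intro: pres_eq.trans)
      qed
    qed
  qed
qed

lemma eval_rep: "eval_word (replicate n GB) = beta ^^ n"
  by (induction n) (auto simp: gen_map_def)

lemma eval_nfw: "eval_word (nfw n a) = (if a then beta ^^ n \<circ> alpha else beta ^^ n)"
  by (simp add: nfw_def eval_word_append eval_rep gen_map_def)

lemma L2: "beta (replicate i X1 @ replicate (Suc j) X0) = replicate (Suc i) X1 @ replicate j X0"
proof (induction i)
  case 0
  have "alpha (replicate j X0) = replicate j X0" by (induction j) auto
  then show ?case by simp
qed auto

lemma L3: "n \<le> j \<Longrightarrow> (beta ^^ n) (replicate i X1 @ replicate j X0) = replicate (i+n) X1 @ replicate (j-n) X0"
proof (induction n arbitrary: i j)
  case 0 then show ?case by simp
next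
  case (Suc n)
  then obtain j' where j: "j = Suc j'" by (cases j) auto
  have "(beta ^^ Suc n) (replicate i X1 @ replicate j X0) = (beta ^^ n) (replicate (Suc i) X1 @ replicate j' X0)"
    by (simp only: funpow_Suc_right comp_apply j L2)
  also have "\<dots> = replicate (Suc i + n) X1 @ replicate (j' - n) X0" using Suc.IH[of j' "Suc i"] Suc.prems j by simp
  finally show ?case using j by simp
qed

lemma alpha_rep0: "alpha (replicate j X0) = replicate j X0" by (induction j) auto

lemma C1: "n \<le> K \<Longrightarrow> count_list (eval_word (nfw n a) (replicate K X0)) X1 = n"
  using L3[of n K 0] by (simp add: eval_nfw alpha_rep0 count_list_append)

lemma C2: assumes "a \<or> n > 0" "n \<le> K"
  shows "count_list (eval_word (nfw n a) (X2 # replicate (Suc K) X0)) X1 = (if a then n+2 else n)"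
proof (cases a)
  case True
  have "alpha (X2 # replicate (Suc K) X0) = replicate 2 X1 @ replicate K X0"
    using L2[of 0 K] by (simp add: numeral_2_eq_2)
  then show ?thesis using True L3[of n K 2] assms by (simp add: eval_nfw count_list_append)
next
  case False
  then obtain p where p: "n = Suc p" using assms by (cases n) auto
  have b1: "beta (X2 # replicate (Suc K) X0) = X0 # X1 # replicate K X0"
    using L2[of 0 K] by simp
  show ?thesis
  proof (cases p)
    case 0 then show ?thesis using False p b1 by (simp add: eval_nfw)
  next
    case (Suc q)
    have b2: "beta (X0 # X1 # replicate K X0) = replicate 2 X1 @ replicate K X0"
      by (simp add: numeral_2_eq_2 alpha_rep0)
    have "(beta ^^ n) (X2 # replicate (Suc K) X0) = (beta ^^ q) (replicate 2 X1 @ replicate K X0)"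
      using p Suc by (simp only: funpow_Suc_right comp_apply b1 b2)
    also have "\<dots> = replicate (2+q) X1 @ replicate (K-q) X0" using L3[of q K 2] assms p Suc by simp
    finally show ?thesis using False p Suc by (simp add: eval_nfw count_list_append)
  qed
qed

lemma Dist: assumes "a \<or> n > 0" "b \<or> m > 0" "eval_word (nfw n a) = eval_word (nfw m b)"
  shows "n = m \<and> a = b"
proof -
  have "n = m" using C1[of n "n+m" a] C1[of m "n+m" b] assms(3) by simp
  moreover have "(if a then n+2 else n) = (if b then m+2 else m)"
    using C2[OF assms(1), of "n+m"] C2[OF assms(2), of "n+m"] assms(3) by simp
  ultimately show ?thesis by (auto split: if_splits)
qed

lemma Key: assumes "u \<noteq> []" "v \<noteq> []" "eval_word u = eval_word v" shows "pres_eq u v"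
proof -
  obtain n a where 1: "a \<or> n > 0" "pres_eq u (nfw n a)" using NF assms(1) by blast
  obtain m b where 2: "b \<or> m > 0" "pres_eq v (nfw m b)" using NF assms(2) by blast
  have "eval_word (nfw n a) = eval_word (nfw m b)" using sound[OF 1(2)] sound[OF 2(2)] assms(3) by simp
  then have "n = m \<and> a = b" using Dist 1(1) 2(1) by blast
  then show ?thesis using 1(2) 2(2) by (blast intro: pres_eq.trans pres_eq.sym)
qed

lemma class_eq: "w \<in> free_words \<Longrightarrow> pres_rel `` {w} = {v \<in> free_words. pres_eq w v}"
  by (auto simp: pres_rel_def)

lemma class_eq2: assumes "pres_eq u v" "u \<in> free_words" "v \<in> free_words" shows "pres_rel `` {u} = pres_rel `` {v}"
  using assms by (auto simp: pres_rel_def intro: pres_eq.trans pres_eq.sym)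

theorem mainTheorem1:
  shows "\<exists>h. (\<forall>w \<in> free_words. h (pres_rel `` {w}) = eval_word w)
            \<and> bij_betw h presented_semigroup S_L"
proof -
  define h where "h X = eval_word (SOME w. w \<in> X)" for X :: "gen list set"
  have hw: "h (pres_rel `` {w}) = eval_word w" if w: "w \<in> free_words" for w
  proof -
    have "w \<in> pres_rel `` {w}" using w class_eq[OF w] by (simp add: pres_eq.refl)
    then have "(SOME v. v \<in> pres_rel `` {w}) \<in> pres_rel `` {w}" by (rule someI)
    then have "pres_eq w (SOME v. v \<in> pres_rel `` {w})" using class_eq[OF w] by simp
    then show ?thesis unfolding h_def using sound by metis
  qed
  have inj: "inj_on h presented_semigroup"
  proof (rule inj_onI)
    fix X Y assume X: "X \<in> presented_semigroup" and Y: "Y \<in> presented_semigroup" and e: "h X = h Y"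
    obtain u where u: "u \<in> free_words" "X = pres_rel `` {u}" using X unfolding presented_semigroup_def quotient_def by blast
    obtain v where v: "v \<in> free_words" "Y = pres_rel `` {v}" using Y unfolding presented_semigroup_def quotient_def by blast
    have "eval_word u = eval_word v" using e hw u v by simp
    then have "pres_eq u v" using Key u(1) v(1) by (simp add: free_words_def)
    then show "X = Y" using u v class_eq2 by metis
  qed
  have img: "h ` presented_semigroup = S_L"
  proof
    show "h ` presented_semigroup \<subseteq> S_L"
      unfolding presented_semigroup_def quotient_def S_L_def using hw by auto
    show "S_L \<subseteq> h ` presented_semigroup"
    proof
      fix f assume "f \<in> S_L"
      then obtain w where w: "w \<in> free_words" "f = eval_word w" unfolding S_L_def by blast
      have "pres_rel `` {w} \<in> presented_semigroup"
        unfolding presented_semigroup_def quotient_def using w by blast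
      then show "f \<in> h ` presented_semigroup" using hw[OF w(1)] w(2) by (metis image_eqI)
    qed
  qed
  show ?thesis using hw inj img unfolding bij_betw_def by blast
qed

end
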